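(* There is an absolute constant $c>0$ such that the following holds. Let $\mathcal G$ be any linear congestion game with $n\ge 3$ players, let $\beta\ge1$ and $T\ge n$, and consider any best response dynamics starting from an arbitrary initial state and satisfying the $(T,\beta)$-Fairness Condition. Then the state $S$ reached after the first $\lceil\log\log n\rceil$ of its $\beta$-bounded $T$-coverings (hence after at most $T\lceil\log\log n\rceil$ best responses) satisfies $C(S)\le c\,\beta\,\mathrm{OPT}$, i.e. $C(S)/\mathrm{OPT}=O(\beta)$.
   Context: A linear congestion game has players $N=\{1,\dots,n\}$, a finite resource set $E$, strategy sets $\Sigma_i\subseteq 2^E$, and delay functions $f_e(x)=a_ex+b_e$ with $a_e,b_e\ge 0$. For a profile $S=(s_1,\dots,s_n)$, $n_e(S)=|\{i:e\in s_i\}|$, the cost of player $i$ is $c_i(S)=\sum_{e\in s_i}f_e(n_e(S))$, the social cost is $C(S)=\sum_i c_i(S)$, and $\mathrm{OPT}=\min_S C(S)$ (assumed positive). A best response of player $i$ in $S$ is a strategy $s_i^b\in\Sigma_i$ minimizing $c_i(S_{-i},\cdot)$ (where $(S_{-i},s_i')$ replaces $s_i$ by $s_i'$); if no strategy strictly decreases $i$'s cost, the best response is $s_i$ itself. A best response dynamics is a sequence of states each obtained from the previous one by a best response of some player. A $T$-covering is a segment of $T$ consecutive best responses of the dynamics in which every player moves at least once; it is $\beta$-bounded if moreover every player moves at most $\beta$ times in it. A dynamics satisfies the $(T,\beta)$-Fairness Condition if it can be decomposed into a sequence of consecutive $\beta$-bounded $T$-coverings. Logarithms are base 2. *)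

theory Defs
  imports Main "HOL-Library.FuncSet" Complex_Main
begin

(* Players are 0..<n; resources are natural numbers in the finite set E;
   profiles are functions from players to strategies (values at i >= n are ignored). *)

definition linear_congestion_game ::
  "nat \<Rightarrow> nat set \<Rightarrow> (nat \<Rightarrow> nat set set) \<Rightarrow> (nat \<Rightarrow> real) \<Rightarrow> (nat \<Rightarrow> real) \<Rightarrow> bool" where
  "linear_congestion_game n E \<Sigma> a b \<longleftrightarrow>
     finite E \<and> (\<forall>i<n. \<Sigma> i \<noteq> {} \<and> \<Sigma> i \<subseteq> Pow E) \<and> (\<forall>e\<in>E. a e \<ge> 0 \<and> b e \<ge> 0)"

definition load :: "nat \<Rightarrow> (nat \<Rightarrow> nat set) \<Rightarrow> nat \<Rightarrow> nat" where
  "load n S e = card {i. i < n \<and> e \<in> S i}"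

definition player_cost ::
  "(nat \<Rightarrow> real) \<Rightarrow> (nat \<Rightarrow> real) \<Rightarrow> nat \<Rightarrow> (nat \<Rightarrow> nat set) \<Rightarrow> nat \<Rightarrow> real" where
  "player_cost a b n S i = (\<Sum>e\<in>S i. a e * real (load n S e) + b e)"

definition social_cost ::
  "(nat \<Rightarrow> real) \<Rightarrow> (nat \<Rightarrow> real) \<Rightarrow> nat \<Rightarrow> (nat \<Rightarrow> nat set) \<Rightarrow> real" where
  "social_cost a b n S = (\<Sum>i<n. player_cost a b n S i)"

definition OPT ::
  "nat \<Rightarrow> (nat \<Rightarrow> nat set set) \<Rightarrow> (nat \<Rightarrow> real) \<Rightarrow> (nat \<Rightarrow> real) \<Rightarrow> real" where
  "OPT n \<Sigma> a b = Min (social_cost a b n ` (Pi\<^sub>E {..<n} \<Sigma>))"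

definition valid_profile :: "nat \<Rightarrow> (nat \<Rightarrow> nat set set) \<Rightarrow> (nat \<Rightarrow> nat set) \<Rightarrow> bool" where
  "valid_profile n \<Sigma> S \<longleftrightarrow> (\<forall>i<n. S i \<in> \<Sigma> i)"

definition best_response_step ::
  "nat \<Rightarrow> (nat \<Rightarrow> nat set set) \<Rightarrow> (nat \<Rightarrow> real) \<Rightarrow> (nat \<Rightarrow> real) \<Rightarrow>
   (nat \<Rightarrow> nat set) \<Rightarrow> nat \<Rightarrow> (nat \<Rightarrow> nat set) \<Rightarrow> bool" where
  "best_response_step n \<Sigma> a b S i S' \<longleftrightarrow> i < n \<and>
     (\<exists>s'\<in>\<Sigma> i. S' = S(i := s') \<and>
        (if (\<exists>s\<in>\<Sigma> i. player_cost a b n (S(i := s)) i < player_cost a b n S i)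
         then (\<forall>s\<in>\<Sigma> i. player_cost a b n (S(i := s')) i \<le> player_cost a b n (S(i := s)) i)
         else s' = S i))"

definition bounded_covering :: "nat \<Rightarrow> real \<Rightarrow> nat \<Rightarrow> (nat \<Rightarrow> nat) \<Rightarrow> nat \<Rightarrow> bool" where
  "bounded_covering n \<beta> T p k \<longleftrightarrow>
     (\<forall>i<n. 1 \<le> card {t \<in> {k*T..<(k+1)*T}. p t = i}
            \<and> real (card {t \<in> {k*T..<(k+1)*T}. p t = i}) \<le> \<beta>)"

end

theory Submission
  imports Defs
begin

lemma CS_sum:
  fixes a :: "'a \<Rightarrow> real"
  shows "(\<Sum>i\<in>I. a i * b i)\<^sup>2 \<le> (\<Sum>i\<in>I. (a i)\<^sup>2) * (\<Sum>i\<in>I. (b i)\<^sup>2)"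
proof (cases "(\<Sum>i\<in>I. (b i)\<^sup>2) > 0")
  case False
  then consider "\<And>i. i\<in>I \<Longrightarrow> b i = 0" | "infinite I"
    by (metis (mono_tags, lifting) sum_pos2 zero_le_power2 zero_less_power2)
  thus ?thesis
    by fastforce
next
  case True
  define r where "r \<equiv> (\<Sum>i\<in>I. a i * b i) / (\<Sum>i\<in>I. (b i)\<^sup>2)"
  have "0 \<le> (\<Sum>i\<in>I. (a i - r * b i)\<^sup>2)"
    by (simp add: sum_nonneg)
  also have "... = (\<Sum>i\<in>I. (a i)\<^sup>2) - 2 * r * (\<Sum>i\<in>I. a i * b i) + r\<^sup>2 * (\<Sum>i\<in>I. (b i)\<^sup>2)"
    by (simp add: algebra_simps power2_eq_square sum_distrib_left flip: sum.distrib)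
  also have "\<dots> = (\<Sum>i\<in>I. (a i)\<^sup>2) - ((\<Sum>i\<in>I. a i * b i))\<^sup>2 / (\<Sum>i\<in>I. (b i)\<^sup>2)"
    by (simp add: r_def power2_eq_square)
  finally have "0 \<le> (\<Sum>i\<in>I. (a i)\<^sup>2) - ((\<Sum>i\<in>I. a i * b i))\<^sup>2 / (\<Sum>i\<in>I. (b i)\<^sup>2)" .
  hence "((\<Sum>i\<in>I. a i * b i))\<^sup>2 / (\<Sum>i\<in>I. (b i)\<^sup>2) \<le> (\<Sum>i\<in>I. (a i)\<^sup>2)"
    by (simp add: le_diff_eq)
  thus "((\<Sum>i\<in>I. a i * b i))\<^sup>2 \<le> (\<Sum>i\<in>I. (a i)\<^sup>2) * (\<Sum>i\<in>I. (b i)\<^sup>2)"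
    by (simp add: pos_divide_le_eq True)
qed

lemma pair_count:
  fixes f :: "'a \<Rightarrow> 'b::linorder"
  assumes "finite U"
  shows "real (card U)^2 \<le> 2 * (\<Sum>i\<in>U. real (card {j\<in>U. f j \<le> f i}))"
proof -
  have c: "real (card {j\<in>U. P j}) = (\<Sum>j\<in>U. if P j then 1 else 0)" for P
    using assms by (simp add: sum.inter_filter[symmetric])
  have sw: "(\<Sum>i\<in>U. \<Sum>j\<in>U. (if f j \<le> f i then 1 else 0::real))
          = (\<Sum>i\<in>U. \<Sum>j\<in>U. (if f i \<le> f j then 1 else 0::real))"
    by (rule sum.swap)
  have "real (card U)^2 = (\<Sum>i\<in>U. \<Sum>j\<in>U. (1::real))"
    by (simp add: power2_eq_square)
  also have "\<dots> \<le> (\<Sum>i\<in>U. \<Sum>j\<in>U. ((if f j \<le> f i then 1 else 0) + (if f i \<le> f j then 1 else 0::real)))"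
    by (intro sum_mono) auto
  also have "\<dots> = 2 * (\<Sum>i\<in>U. \<Sum>j\<in>U. (if f j \<le> f i then 1 else 0::real))"
    using sw by (simp add: sum.distrib)
  finally show ?thesis by (simp add: c)
qed

lemma sq_help: "(c::real) \<ge> 0 \<Longrightarrow> c * x * y = (sqrt c * x) * (sqrt c * y)"
proof -
  assume c: "c \<ge> 0"
  have "(sqrt c * x) * (sqrt c * y) = (sqrt c * sqrt c) * (x * y)" by (simp only: ac_simps)
  also have "sqrt c * sqrt c = c" using c by simp
  finally show ?thesis by (simp only: ac_simps)
qed

locale game =
  fixes n :: nat and E :: "nat set" and Sg :: "nat \<Rightarrow> nat set set" and a b :: "nat \<Rightarrow> real"
  assumes lcg: "linear_congestion_game n E Sg a b"
begin

abbreviation "ld S e \<equiv> real (load n S e)"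
abbreviation "cost S i \<equiv> player_cost a b n S i"
abbreviation "SC S \<equiv> social_cost a b n S"
abbreviation "valid S \<equiv> valid_profile n Sg S"

lemma finE: "finite E" using lcg unfolding linear_congestion_game_def by auto
lemma a_nn: "e \<in> E \<Longrightarrow> a e \<ge> 0" using lcg unfolding linear_congestion_game_def by auto
lemma b_nn: "e \<in> E \<Longrightarrow> b e \<ge> 0" using lcg unfolding linear_congestion_game_def by auto
lemma Sg_sub: "i < n \<Longrightarrow> s \<in> Sg i \<Longrightarrow> s \<subseteq> E" using lcg unfolding linear_congestion_game_def by auto

lemma valid_sub: "valid S \<Longrightarrow> i < n \<Longrightarrow> S i \<subseteq> E"
  using Sg_sub unfolding valid_profile_def by auto

lemma swap_sum:
  assumes "\<And>i. i < n \<Longrightarrow> S i \<subseteq> E"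
  shows "(\<Sum>i<n. \<Sum>e\<in>S i. g i e) = (\<Sum>e\<in>E. \<Sum>i\<in>{i. i < n \<and> e \<in> S i}. g i e)"
proof -
  have "(\<Sum>i<n. \<Sum>e\<in>S i. g i e) = (\<Sum>i\<in>{..<n}. \<Sum>e\<in>{e. e \<in> E \<and> e \<in> S i}. g i e)"
    using assms by (intro sum.cong refl) blast+
  also have "\<dots> = (\<Sum>e\<in>E. \<Sum>i\<in>{i. i \<in> {..<n} \<and> e \<in> S i}. g i e)"
    by (rule sum.swap_restrict) (auto simp: finE)
  finally show ?thesis by simp
qed

lemma load_le: "load n S e \<le> n"
  unfolding load_def by (rule order_trans[OF card_mono[of "{..<n}"]]) auto

lemma load_upd: "load n (S(i:=s)) e \<le> load n S e + 1"
proof -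
  have "{j. j < n \<and> e \<in> (S(i:=s)) j} \<subseteq> insert i {j. j < n \<and> e \<in> S j}" by auto
  hence "load n (S(i:=s)) e \<le> card (insert i {j. j < n \<and> e \<in> S j})"
    unfolding load_def by (intro card_mono) auto
  also have "\<dots> \<le> load n S e + 1" unfolding load_def by (simp add: card_insert_if)
  finally show ?thesis .
qed

lemma SC_eq:
  assumes "\<And>i. i < n \<Longrightarrow> S i \<subseteq> E"
  shows "SC S = (\<Sum>e\<in>E. a e * (ld S e)^2 + b e * ld S e)"
proof -
  have "SC S = (\<Sum>e\<in>E. \<Sum>i\<in>{i. i < n \<and> e \<in> S i}. a e * ld S e + b e)"
    unfolding social_cost_def player_cost_def by (rule swap_sum[OF assms])
  also have "\<dots> = (\<Sum>e\<in>E. a e * (ld S e)^2 + b e * ld S e)"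
    by (intro sum.cong refl) (simp add: load_def power2_eq_square algebra_simps)
  finally show ?thesis .
qed

lemma aSq_le:
  assumes "valid S"
  shows "(\<Sum>e\<in>E. a e * (ld S e)^2) \<le> SC S"
proof -
  have sS: "\<And>i. i < n \<Longrightarrow> S i \<subseteq> E" using valid_sub[OF assms] by auto
  have "(\<Sum>e\<in>E. a e * (ld S e)^2) \<le> (\<Sum>e\<in>E. a e * (ld S e)^2 + b e * ld S e)"
    using b_nn by (intro sum_mono) auto
  thus ?thesis using SC_eq[OF sS] by simp
qed

lemma aSq_nn: "(\<Sum>e\<in>E. a e * (ld S e)^2) \<ge> 0"
  using a_nn by (intro sum_nonneg) auto

lemma SC_nn: "valid S \<Longrightarrow> SC S \<ge> 0"
  using aSq_le aSq_nn order_trans by blast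

lemma brs_le:
  assumes "best_response_step n Sg a b S i S'" "s \<in> Sg i"
  shows "cost S' i \<le> cost (S(i:=s)) i"
proof -
  from assms(1) obtain s' where s': "s' \<in> Sg i" "S' = S(i:=s')"
    and c: "(if (\<exists>s\<in>Sg i. cost (S(i := s)) i < cost S i)
         then (\<forall>s\<in>Sg i. cost (S(i := s')) i \<le> cost (S(i := s)) i)
         else s' = S i)"
    unfolding best_response_step_def by blast
  show ?thesis
  proof (cases "\<exists>s\<in>Sg i. cost (S(i := s)) i < cost S i")
    case True with c s' assms(2) show ?thesis by auto
  next
    case False
    with c have "s' = S i" by auto
    with s' have "S' = S" by auto
    with False assms(2) show ?thesis by (simp add: not_less)
  qed
qed

lemma cost_dev:
  assumes "i < n" "s \<subseteq> E"
  shows "cost (S(i:=s)) i \<le> (\<Sum>e\<in>s. a e * (ld S e + 1) + b e)"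
  unfolding player_cost_def fun_upd_same
proof (intro sum_mono)
  fix e assume "e \<in> s"
  hence e: "e \<in> E" using assms by auto
  have "ld (S(i:=s)) e \<le> ld S e + 1" using load_upd[of S i s e] by linarith
  thus "a e * ld (S(i:=s)) e + b e \<le> a e * (ld S e + 1) + b e"
    using a_nn[OF e] by (simp add: mult_left_mono)
qed

lemma brs_bound:
  assumes "best_response_step n Sg a b S i S'" "s \<in> Sg i"
  shows "cost S' i \<le> (\<Sum>e\<in>s. a e * (ld S e + 1) + b e)"
proof -
  have "i < n" using assms unfolding best_response_step_def by auto
  thus ?thesis using brs_le[OF assms] cost_dev[of i s S] Sg_sub[OF _ assms(2)] by auto
qed

lemma brs_other: "best_response_step n Sg a b S i S' \<Longrightarrow> j \<noteq> i \<Longrightarrow> S' j = S j"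
  unfolding best_response_step_def by auto

lemma brs_valid: "best_response_step n Sg a b S i S' \<Longrightarrow> valid S \<Longrightarrow> valid S'"
  unfolding best_response_step_def valid_profile_def by auto

lemma brs_lt: "best_response_step n Sg a b S i S' \<Longrightarrow> i < n"
  unfolding best_response_step_def by auto


context
  fixes X :: "nat \<Rightarrow> nat \<Rightarrow> nat set" and p :: "nat \<Rightarrow> nat" and t0 T :: nat
  assumes steps: "\<forall>t\<in>{t0..<t0+T}. best_response_step n Sg a b (X t) (p t) (X (Suc t))"
  and val0: "valid (X t0)"
begin

lemma stepD: "t0 \<le> t \<Longrightarrow> t < t0 + T \<Longrightarrow> best_response_step n Sg a b (X t) (p t) (X (Suc t))"
  using steps by auto

lemma p_lt: "t0 \<le> t \<Longrightarrow> t < t0 + T \<Longrightarrow> p t < n"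
  using stepD brs_lt by blast

lemma valid_t: "t0 \<le> t \<Longrightarrow> t \<le> t0 + T \<Longrightarrow> valid (X t)"
proof (induction t rule: dec_induct)
  case base thus ?case using val0 by simp
next
  case (step m)
  have "best_response_step n Sg a b (X m) (p m) (X (Suc m))" using stepD step by simp
  thus ?case using brs_valid step by simp
qed

lemma valid_sub_t: "t0 \<le> t \<Longrightarrow> t \<le> t0 + T \<Longrightarrow> i < n \<Longrightarrow> X t i \<subseteq> E"
  using valid_t valid_sub by blast

lemma frame:
  assumes "t0 \<le> u" "u \<le> v" "v \<le> t0 + T" "\<forall>t\<in>{u..<v}. p t \<noteq> i"
  shows "X v i = X u i"
  using assms(2,3,4)
proof (induction v rule: dec_induct)
  case base thus ?case by simp
next
  case (step m)
  have "p m \<noteq> i" using step by auto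
  moreover have "t0 \<le> m" "m < t0 + T" using step assms(1) by auto
  ultimately have "X (Suc m) i = X m i"
    using brs_other[OF stepD[of m], of i] by auto
  thus ?case using step by auto
qed

definition Z :: "nat \<Rightarrow> real" where
  "Z e = (\<Sum>\<tau>\<in>{\<tau>\<in>{t0..<t0+T}. e \<in> X (Suc \<tau>) (p \<tau>)}. ld (X (Suc \<tau>)) e)"

lemma Z_nn: "Z e \<ge> 0" unfolding Z_def by (simp add: sum_nonneg)

lemma aZ_eq: "a e * Z e = (\<Sum>\<tau>\<in>{\<tau>. \<tau> \<in> {t0..<t0+T} \<and> e \<in> X (Suc \<tau>) (p \<tau>)}. a e * ld (X (Suc \<tau>)) e)"
  unfolding Z_def by (simp add: sum_distrib_left)

lemma peak:
  assumes "t0 \<le> t" "t \<le> t0 + T"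
  shows "ld (X t) e \<le> ld (X t0) e + sqrt (2 * Z e)"
proof -
  define P where "P = {j. j < n \<and> e \<in> X t j}"
  define mv where "mv j = {\<tau>\<in>{t0..<t}. p \<tau> = j}" for j
  define P0 where "P0 = {j\<in>P. mv j = {}}"
  define P1 where "P1 = {j\<in>P. mv j \<noteq> {}}"
  define lm where "lm j = Max (mv j)" for j
  have finP: "finite P" unfolding P_def by auto
  have finmv: "finite (mv j)" for j unfolding mv_def by auto
  have "P = P0 \<union> P1" unfolding P0_def P1_def by auto
  hence cP: "card P \<le> card P0 + card P1" by (metis card_Un_le)
  have "P0 \<subseteq> {j. j < n \<and> e \<in> X t0 j}"
  proof
    fix j assume "j \<in> P0"
    hence j: "j < n" "e \<in> X t j" "mv j = {}" unfolding P0_def P_def by auto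
    have "X t j = X t0 j" using frame[of t0 t j] j(3) assms unfolding mv_def by auto
    thus "j \<in> {j. j < n \<and> e \<in> X t0 j}" using j by auto
  qed
  hence c0: "card P0 \<le> load n (X t0) e" unfolding load_def by (intro card_mono) auto
  have lm_in: "lm j \<in> mv j" if "j \<in> P1" for j
    using that finmv unfolding lm_def P1_def by (intro Max_in) auto
  have lm_max: "\<tau> \<le> lm j" if "\<tau> \<in> mv j" for \<tau> j
    using that finmv unfolding lm_def by (intro Max_ge) auto
  have lm_p: "p (lm j) = j" if "j \<in> P1" for j using lm_in[OF that] unfolding mv_def by auto
  have lm_rng: "t0 \<le> lm j" "lm j < t" if "j \<in> P1" for j using lm_in[OF that] unfolding mv_def by auto
  have fr: "X (Suc (lm j)) k = X t k" if "j \<in> P1" "k \<in> P1" "lm k \<le> lm j" for j k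
  proof -
    have "\<forall>\<tau>\<in>{Suc (lm j)..<t}. p \<tau> \<noteq> k"
    proof
      fix \<tau> assume \<tau>: "\<tau> \<in> {Suc (lm j)..<t}"
      show "p \<tau> \<noteq> k"
      proof
        assume "p \<tau> = k"
        hence "\<tau> \<in> mv k" using \<tau> lm_rng[OF that(1)] unfolding mv_def by auto
        hence "\<tau> \<le> lm k" by (rule lm_max)
        thus False using \<tau> that(3) by auto
      qed
    qed
    thus ?thesis using frame[of "Suc (lm j)" t k] lm_rng[OF that(1)] assms by auto
  qed
  have inP1: "k \<in> P1 \<Longrightarrow> k < n \<and> e \<in> X t k" for k unfolding P1_def P_def by auto
  have cnt: "real (card {k\<in>P1. lm k \<le> lm j}) \<le> ld (X (Suc (lm j))) e" if "j \<in> P1" for j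
  proof -
    have "{k\<in>P1. lm k \<le> lm j} \<subseteq> {k. k < n \<and> e \<in> X (Suc (lm j)) k}"
      using fr[OF that] inP1 by auto
    thus ?thesis unfolding load_def by (simp add: card_mono)
  qed
  have finP1: "finite P1" using finP unfolding P1_def by auto
  have inj: "inj_on lm P1" by (metis inj_onI lm_p)
  have sub: "lm ` P1 \<subseteq> {\<tau>\<in>{t0..<t0+T}. e \<in> X (Suc \<tau>) (p \<tau>)}"
  proof
    fix \<tau> assume "\<tau> \<in> lm ` P1"
    then obtain j where j: "j \<in> P1" "\<tau> = lm j" by auto
    have "X (Suc (lm j)) j = X t j" using fr[OF j(1) j(1)] by simp
    thus "\<tau> \<in> {\<tau>\<in>{t0..<t0+T}. e \<in> X (Suc \<tau>) (p \<tau>)}"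
      using j lm_rng[OF j(1)] lm_p[OF j(1)] inP1[OF j(1)] assms by auto
  qed
  have "real (card P1)^2 \<le> 2 * (\<Sum>j\<in>P1. real (card {k\<in>P1. lm k \<le> lm j}))"
    by (rule pair_count[OF finP1])
  also have "\<dots> \<le> 2 * (\<Sum>j\<in>P1. ld (X (Suc (lm j))) e)"
    using cnt by (simp add: sum_mono)
  also have "(\<Sum>j\<in>P1. ld (X (Suc (lm j))) e) = (\<Sum>\<tau>\<in>lm ` P1. ld (X (Suc \<tau>)) e)"
    using sum.reindex[OF inj, of "\<lambda>\<tau>. ld (X (Suc \<tau>)) e"] by simp
  also have "\<dots> \<le> Z e" unfolding Z_def
    by (rule sum_mono2[OF _ sub]) auto
  finally have "real (card P1)^2 \<le> 2 * Z e" by simp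
  hence "real (card P1) \<le> sqrt (2 * Z e)" by (simp add: real_le_rsqrt)
  moreover have "ld (X t) e = real (card P)" unfolding load_def P_def by simp
  ultimately show ?thesis using cP c0 by linarith
qed


end

lemma G_bound:
  assumes "valid Op"
  shows "(\<Sum>i<n. \<Sum>e\<in>Op i. a e * (M e + 1) + b e) \<le> (\<Sum>e\<in>E. a e * ld Op e * M e) + SC Op"
proof -
  have sO: "\<And>i. i < n \<Longrightarrow> Op i \<subseteq> E" using valid_sub[OF assms] by auto
  have "(\<Sum>i<n. \<Sum>e\<in>Op i. a e * (M e + 1) + b e) = (\<Sum>e\<in>E. \<Sum>i\<in>{i. i < n \<and> e \<in> Op i}. a e * (M e + 1) + b e)"
    by (rule swap_sum[OF sO])
  also have "\<dots> = (\<Sum>e\<in>E. ld Op e * (a e * (M e + 1) + b e))"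
    by (intro sum.cong refl) (simp add: load_def)
  also have "\<dots> \<le> (\<Sum>e\<in>E. a e * ld Op e * M e + (a e * (ld Op e)^2 + b e * ld Op e))"
  proof (intro sum_mono)
    fix e assume e: "e \<in> E"
    have "ld Op e \<le> (ld Op e)^2" by (cases "load n Op e") (auto simp: power2_eq_square)
    hence "a e * ld Op e \<le> a e * (ld Op e)^2" using a_nn[OF e] by (simp add: mult_left_mono)
    thus "ld Op e * (a e * (M e + 1) + b e) \<le> a e * ld Op e * M e + (a e * (ld Op e)^2 + b e * ld Op e)"
      by (simp add: algebra_simps)
  qed
  also have "\<dots> = (\<Sum>e\<in>E. a e * ld Op e * M e) + SC Op"
    by (simp add: sum.distrib SC_eq[OF sO])
  finally show ?thesis .
qed

context
  fixes X :: "nat \<Rightarrow> nat \<Rightarrow> nat set" and p :: "nat \<Rightarrow> nat" and t0 T :: nat and \<beta> :: real and Op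
  assumes steps: "\<forall>t\<in>{t0..<t0+T}. best_response_step n Sg a b (X t) (p t) (X (Suc t))"
  and val0: "valid (X t0)"
  and cover: "\<forall>i<n. 1 \<le> card {t\<in>{t0..<t0+T}. p t = i} \<and> real (card {t\<in>{t0..<t0+T}. p t = i}) \<le> \<beta>"
  and valO: "valid Op"
begin

lemma main_M:
  assumes M: "\<And>t e. t0 \<le> t \<Longrightarrow> t < t0 + T \<Longrightarrow> e \<in> E \<Longrightarrow> ld (X t) e \<le> M e"
  shows "SC (X (t0+T)) \<le> 2 * (\<Sum>e\<in>E. a e * ld Op e * M e) + 2 * SC Op"
proof -
  define mv where "mv i = {t\<in>{t0..<t0+T}. p t = i}" for i
  define lt where "lt i = Max (mv i)" for i
  define S' where "S' = X (t0+T)"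
  have finmv: "finite (mv i)" for i unfolding mv_def by auto
  have ne: "mv i \<noteq> {}" if "i < n" for i
    using cover that unfolding mv_def by (metis card.empty not_one_le_zero)
  have lt_in: "lt i \<in> mv i" if "i < n" for i
    using ne[OF that] finmv unfolding lt_def by (intro Max_in) auto
  have lt_max: "t \<le> lt i" if "t \<in> mv i" for t i
    using that finmv unfolding lt_def by (intro Max_ge) auto
  have lt_rng: "t0 \<le> lt i" "lt i < t0 + T" "p (lt i) = i" if "i < n" for i
    using lt_in[OF that] unfolding mv_def by auto
  have fr: "X (Suc (lt i)) j = S' j" if "i < n" "j < n" "lt j \<le> lt i" for i j
  proof -
    have "\<forall>\<tau>\<in>{Suc (lt i)..<t0+T}. p \<tau> \<noteq> j"
    proof
      fix \<tau> assume \<tau>: "\<tau> \<in> {Suc (lt i)..<t0+T}"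
      show "p \<tau> \<noteq> j"
      proof
        assume "p \<tau> = j"
        hence "\<tau> \<in> mv j" using \<tau> lt_rng[OF that(1)] unfolding mv_def by auto
        hence "\<tau> \<le> lt j" by (rule lt_max)
        thus False using \<tau> that(3) by auto
      qed
    qed
    thus ?thesis using frame[OF steps val0, of "Suc (lt i)" "t0+T" j] lt_rng[OF that(1)] unfolding S'_def by auto
  qed
  have vS': "valid S'" unfolding S'_def using valid_t[OF steps val0] by auto
  have sS': "\<And>i. i < n \<Longrightarrow> S' i \<subseteq> E" using valid_sub[OF vS'] by auto
  define U where "U e = {i. i < n \<and> e \<in> S' i}" for e
  have finU: "finite (U e)" for e unfolding U_def by auto
  have lb: "(\<Sum>e\<in>S' i. a e * real (card {j\<in>U e. lt j \<le> lt i}) + b e) \<le> cost (X (Suc (lt i))) i"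
    if i: "i < n" for i
  proof -
    have "cost (X (Suc (lt i))) i = (\<Sum>e\<in>S' i. a e * ld (X (Suc (lt i))) e + b e)"
      unfolding player_cost_def using fr[OF i i] by simp
    moreover have "a e * real (card {j\<in>U e. lt j \<le> lt i}) \<le> a e * ld (X (Suc (lt i))) e"
      if e: "e \<in> S' i" for e
    proof -
      have "{j\<in>U e. lt j \<le> lt i} \<subseteq> {j. j < n \<and> e \<in> X (Suc (lt i)) j}"
        using fr[OF i] unfolding U_def by auto
      hence "card {j\<in>U e. lt j \<le> lt i} \<le> load n (X (Suc (lt i))) e"
        unfolding load_def by (intro card_mono) auto
      thus ?thesis using a_nn sS'[OF i] e by (simp add: mult_left_mono subset_iff)
    qed
    ultimately show ?thesis by (simp add: sum_mono)
  qed
  have "SC S' = (\<Sum>e\<in>E. a e * (real (card (U e)))^2 + b e * real (card (U e)))"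
    using SC_eq[OF sS'] unfolding U_def load_def by simp
  also have "\<dots> \<le> (\<Sum>e\<in>E. 2 * (a e * (\<Sum>i\<in>U e. real (card {j\<in>U e. lt j \<le> lt i})) + b e * real (card (U e))))"
  proof (intro sum_mono)
    fix e assume e: "e \<in> E"
    have "a e * (real (card (U e)))^2 \<le> a e * (2 * (\<Sum>i\<in>U e. real (card {j\<in>U e. lt j \<le> lt i})))"
      using pair_count[OF finU, of e lt] a_nn[OF e] by (simp add: mult_left_mono)
    thus "a e * (real (card (U e)))^2 + b e * real (card (U e)) \<le> 2 * (a e * (\<Sum>i\<in>U e. real (card {j\<in>U e. lt j \<le> lt i})) + b e * real (card (U e)))"
      using b_nn[OF e] by (simp add: algebra_simps) (meson add_increasing mult_nonneg_nonneg of_nat_0_le_iff order_trans)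
  qed
  also have "\<dots> = 2 * (\<Sum>e\<in>E. \<Sum>i\<in>U e. a e * real (card {j\<in>U e. lt j \<le> lt i}) + b e)"
    by (simp add: sum_distrib_left sum.distrib mult.commute)
  also have "(\<Sum>e\<in>E. \<Sum>i\<in>U e. a e * real (card {j\<in>U e. lt j \<le> lt i}) + b e)
      = (\<Sum>i<n. \<Sum>e\<in>S' i. a e * real (card {j\<in>U e. lt j \<le> lt i}) + b e)"
    unfolding U_def by (rule swap_sum[OF sS', symmetric])
  also have "\<dots> \<le> (\<Sum>i<n. cost (X (Suc (lt i))) i)"
    by (intro sum_mono) (auto intro: lb)
  also have "\<dots> \<le> (\<Sum>i<n. \<Sum>e\<in>Op i. a e * (M e + 1) + b e)"
  proof (intro sum_mono)
    fix i assume "i \<in> {..<n}"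
    hence i: "i < n" by simp
    have br: "best_response_step n Sg a b (X (lt i)) i (X (Suc (lt i)))"
      using stepD[OF steps val0, of "lt i"] lt_rng[OF i] by simp
    have Oi: "Op i \<in> Sg i" using valO i unfolding valid_profile_def by auto
    have "cost (X (Suc (lt i))) i \<le> (\<Sum>e\<in>Op i. a e * (ld (X (lt i)) e + 1) + b e)"
      by (rule brs_bound[OF br Oi])
    also have "\<dots> \<le> (\<Sum>e\<in>Op i. a e * (M e + 1) + b e)"
    proof (intro sum_mono)
      fix e assume "e \<in> Op i"
      hence e: "e \<in> E" using Sg_sub[OF i Oi] by auto
      show "a e * (ld (X (lt i)) e + 1) + b e \<le> a e * (M e + 1) + b e"
        using M[OF lt_rng(1,2)[OF i] e] a_nn[OF e] by (simp add: mult_left_mono)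
    qed
    finally show "cost (X (Suc (lt i))) i \<le> (\<Sum>e\<in>Op i. a e * (M e + 1) + b e)" .
  qed
  also have "\<dots> \<le> (\<Sum>e\<in>E. a e * ld Op e * M e) + SC Op" by (rule G_bound[OF valO])
  finally show ?thesis unfolding S'_def by simp
qed


lemma cov_n: "SC (X (t0+T)) \<le> (2 * real n + 2) * SC Op"
proof -
  have sO: "\<And>i. i < n \<Longrightarrow> Op i \<subseteq> E" using valid_sub[OF valO] by auto
  have "SC (X (t0+T)) \<le> 2 * (\<Sum>e\<in>E. a e * ld Op e * real n) + 2 * SC Op"
    by (rule main_M) (simp add: load_le)
  also have "(\<Sum>e\<in>E. a e * ld Op e * real n) \<le> (\<Sum>e\<in>E. real n * (a e * (ld Op e)^2 + b e * ld Op e))"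
  proof (intro sum_mono)
    fix e assume e: "e \<in> E"
    have "ld Op e \<le> (ld Op e)^2" by (cases "load n Op e") (auto simp: power2_eq_square)
    hence "a e * ld Op e \<le> a e * (ld Op e)^2 + b e * ld Op e" using a_nn[OF e] b_nn[OF e]
      by (meson add_increasing2 mult_left_mono mult_nonneg_nonneg of_nat_0_le_iff)
    thus "a e * ld Op e * real n \<le> real n * (a e * (ld Op e)^2 + b e * ld Op e)"
      by (simp add: mult.commute mult_left_mono)
  qed
  also have "\<dots> = real n * SC Op" by (simp add: SC_eq[OF sO] sum_distrib_left)
  finally show ?thesis by (simp add: algebra_simps)
qed

lemma cov_rec:
  assumes "\<beta> \<ge> 1" "SC Op > 0"
  shows "SC (X (t0+T)) \<le> 10 * \<beta> * SC Op + 4 * (\<Sum>e\<in>E. a e * ld Op e * ld (X t0) e)"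
proof -
  define Zf where "Zf = Z X p t0 T"
  define M where "M e = ld (X t0) e + sqrt (2 * Zf e)" for e
  define U where "U = SC Op"
  define W1 where "W1 = (\<Sum>e\<in>E. a e * ld Op e * ld (X t0) e)"
  define W2 where "W2 = (\<Sum>e\<in>E. a e * ld Op e * sqrt (2 * Zf e))"
  define R where "R = {t0..<t0+T}"
  have sO: "\<And>i. i < n \<Longrightarrow> Op i \<subseteq> E" using valid_sub[OF valO] by auto
  have Zf_nn: "Zf e \<ge> 0" for e unfolding Zf_def by (rule Z_nn[OF steps val0])
  have M_nn: "M e \<ge> 0" for e unfolding M_def using Zf_nn by simp
  have Mb: "ld (X t) e \<le> M e" if "t0 \<le> t" "t < t0 + T" for t e
    unfolding M_def Zf_def using peak[OF steps val0, of t e] that by simp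
  have W: "(\<Sum>e\<in>E. a e * ld Op e * M e) = W1 + W2"
    unfolding W1_def W2_def M_def by (simp add: algebra_simps sum.distrib)
  have main: "SC (X (t0+T)) \<le> 2 * (W1 + W2) + 2 * U"
    using main_M[of M] Mb W unfolding U_def by simp
  define G where "G i = (\<Sum>e\<in>Op i. a e * (M e + 1) + b e)" for i
  have G_nn: "G i \<ge> 0" if "i < n" for i unfolding G_def
    using sO[OF that] a_nn b_nn M_nn by (intro sum_nonneg) (auto intro!: add_nonneg_nonneg mult_nonneg_nonneg)
  have sX: "X (Suc \<tau>) (p \<tau>) \<subseteq> E" if "\<tau> \<in> R" for \<tau>
    using valid_sub_t[OF steps val0, of "Suc \<tau>" "p \<tau>"] p_lt[OF steps val0, of \<tau>] that unfolding R_def by auto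
  have "(\<Sum>e\<in>E. a e * Zf e) = (\<Sum>e\<in>E. \<Sum>\<tau>\<in>{\<tau>. \<tau> \<in> R \<and> e \<in> X (Suc \<tau>) (p \<tau>)}. a e * ld (X (Suc \<tau>)) e)"
    unfolding Zf_def R_def using aZ_eq[OF steps val0] by presburger
  also have "\<dots> = (\<Sum>\<tau>\<in>R. \<Sum>e\<in>{e. e \<in> E \<and> e \<in> X (Suc \<tau>) (p \<tau>)}. a e * ld (X (Suc \<tau>)) e)"
    by (rule sum.swap_restrict) (auto simp: finE R_def)
  also have "\<dots> = (\<Sum>\<tau>\<in>R. \<Sum>e\<in>X (Suc \<tau>) (p \<tau>). a e * ld (X (Suc \<tau>)) e)"
    using sX by (intro sum.cong refl) blast+
  also have "\<dots> \<le> (\<Sum>\<tau>\<in>R. cost (X (Suc \<tau>)) (p \<tau>))"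
    unfolding player_cost_def using sX b_nn by (intro sum_mono) (auto intro!: sum_mono)
  also have "\<dots> \<le> (\<Sum>\<tau>\<in>R. G (p \<tau>))"
  proof (intro sum_mono)
    fix \<tau> assume \<tau>: "\<tau> \<in> R"
    have br: "best_response_step n Sg a b (X \<tau>) (p \<tau>) (X (Suc \<tau>))"
      using stepD[OF steps val0, of \<tau>] \<tau> unfolding R_def by simp
    have pl: "p \<tau> < n" using brs_lt[OF br] .
    have Oi: "Op (p \<tau>) \<in> Sg (p \<tau>)" using valO pl unfolding valid_profile_def by auto
    have "cost (X (Suc \<tau>)) (p \<tau>) \<le> (\<Sum>e\<in>Op (p \<tau>). a e * (ld (X \<tau>) e + 1) + b e)"
      by (rule brs_bound[OF br Oi])
    also have "\<dots> \<le> G (p \<tau>)" unfolding G_def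
    proof (intro sum_mono)
      fix e assume "e \<in> Op (p \<tau>)"
      hence e: "e \<in> E" using Sg_sub[OF pl Oi] by auto
      show "a e * (ld (X \<tau>) e + 1) + b e \<le> a e * (M e + 1) + b e"
        using Mb[of \<tau> e] \<tau> a_nn[OF e] unfolding R_def by (simp add: mult_left_mono)
    qed
    finally show "cost (X (Suc \<tau>)) (p \<tau>) \<le> G (p \<tau>)" .
  qed
  also have "\<dots> = (\<Sum>\<tau>\<in>R. \<Sum>i\<in>{i. i \<in> {..<n} \<and> p \<tau> = i}. G i)"
  proof (intro sum.cong refl)
    fix \<tau> assume "\<tau> \<in> R"
    hence "p \<tau> < n" using p_lt[OF steps val0] unfolding R_def by auto
    hence "{i. i \<in> {..<n} \<and> p \<tau> = i} = {p \<tau>}" by auto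
    thus "G (p \<tau>) = (\<Sum>i\<in>{i. i \<in> {..<n} \<and> p \<tau> = i}. G i)" by simp
  qed
  also have "\<dots> = (\<Sum>i\<in>{..<n}. \<Sum>\<tau>\<in>{\<tau>. \<tau> \<in> R \<and> p \<tau> = i}. G i)"
    by (rule sum.swap_restrict) (auto simp: R_def)
  also have "\<dots> = (\<Sum>i<n. real (card {t\<in>{t0..<t0+T}. p t = i}) * G i)"
    unfolding R_def by simp
  also have "\<dots> \<le> (\<Sum>i<n. \<beta> * G i)"
    using cover G_nn by (intro sum_mono mult_right_mono) auto
  also have "\<dots> = \<beta> * (\<Sum>i<n. G i)" by (simp add: sum_distrib_left)
  also have "\<dots> \<le> \<beta> * (W1 + W2 + U)"
    using G_bound[OF valO, of M] W assms(1) unfolding G_def U_def by (simp add: mult_left_mono)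
  finally have aZ: "(\<Sum>e\<in>E. a e * Zf e) \<le> \<beta> * (W1 + W2 + U)" .
  have "W2^2 = (\<Sum>e\<in>E. (sqrt (a e) * ld Op e) * (sqrt (a e) * sqrt (2 * Zf e)))^2"
    unfolding W2_def using a_nn by (intro arg_cong[where f="\<lambda>x. x^2"] sum.cong refl sq_help) auto
  also have "\<dots> \<le> (\<Sum>e\<in>E. (sqrt (a e) * ld Op e)^2) * (\<Sum>e\<in>E. (sqrt (a e) * sqrt (2 * Zf e))^2)"
    by (rule CS_sum)
  also have "(\<Sum>e\<in>E. (sqrt (a e) * ld Op e)^2) = (\<Sum>e\<in>E. a e * (ld Op e)^2)"
    using a_nn by (intro sum.cong refl) (simp add: power_mult_distrib)
  also have "(\<Sum>e\<in>E. (sqrt (a e) * sqrt (2 * Zf e))^2) = 2 * (\<Sum>e\<in>E. a e * Zf e)"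
    using a_nn Zf_nn by (simp add: power_mult_distrib sum_distrib_left mult.left_commute)
  finally have cs: "W2^2 \<le> (\<Sum>e\<in>E. a e * (ld Op e)^2) * (2 * (\<Sum>e\<in>E. a e * Zf e))" .
  have AU: "(\<Sum>e\<in>E. a e * (ld Op e)^2) \<le> U"
    unfolding U_def by (rule aSq_le[OF valO])
  have aZ_nn: "(\<Sum>e\<in>E. a e * Zf e) \<ge> 0" using a_nn Zf_nn by (intro sum_nonneg) auto
  have "W2^2 \<le> U * (2 * (\<Sum>e\<in>E. a e * Zf e))"
    using cs mult_right_mono[OF AU, of "2 * (\<Sum>e\<in>E. a e * Zf e)"] aZ_nn by linarith
  have U_pos: "U > 0" using assms unfolding U_def by simp
  have W1_nn: "W1 \<ge> 0" unfolding W1_def using a_nn by (intro sum_nonneg) auto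
  have W2_nn: "W2 \<ge> 0" unfolding W2_def using a_nn Zf_nn by (intro sum_nonneg mult_nonneg_nonneg) auto
  have "U * (2 * (\<Sum>e\<in>E. a e * Zf e)) \<le> U * (2 * (\<beta> * (W1 + W2 + U)))"
    using aZ U_pos by (intro mult_left_mono) auto
  also have "\<dots> = 2 * \<beta> * U * (W1 + W2 + U)" by (simp add: algebra_simps)
  finally have W2sq': "W2^2 \<le> 2 * \<beta> * U * (W1 + W2 + U)"
    using \<open>W2^2 \<le> U * (2 * (\<Sum>e\<in>E. a e * Zf e))\<close> by linarith
  define P where "P = \<beta> * U"
  have PU: "P \<ge> U" unfolding P_def using assms(1) U_pos by simp
  have P_pos: "P > 0" using PU U_pos by simp
  have W2b: "W2 \<le> 4 * P + W1"
  proof (rule ccontr)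
    assume "\<not> ?thesis"
    hence gt: "W2 > 4 * P + W1" by simp
    have h1: "(4 * P + W1) * (2 * P + W1) < W2 * (W2 - 2 * P)"
      using gt P_pos W1_nn by (intro mult_strict_mono) auto
    have h2: "(4 * P + W1) * (2 * P + W1) = 8 * (P * P) + 6 * (P * W1) + W1 * W1"
      by (simp add: algebra_simps)
    have h3: "W2 * (W2 - 2 * P) = W2^2 - 2 * (P * W2)"
      by (simp add: algebra_simps power2_eq_square)
    have h4: "P * P \<ge> P * U" using PU P_pos by (intro mult_left_mono) auto
    have h5: "2 * \<beta> * U * (W1 + W2 + U) = 2 * (P * W1) + 2 * (P * W2) + 2 * (P * U)"
      by (simp add: P_def algebra_simps)
    have h6: "W1 * W1 \<ge> 0" "P * W1 \<ge> 0" "P * U \<ge> 0" using W1_nn P_pos U_pos by auto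
    show False using h1 h2 h3 h4 h5 h6 W2sq' by linarith
  qed
  have main': "SC (X (t0+T)) \<le> 2 * (W1 + W2) + 2 * U" by (rule main)
  have "2 * W1 + 2 * W2 + 2 * U \<le> 10 * P + 4 * W1" using W2b PU by linarith
  hence "2 * (W1 + W2) + 2 * U \<le> 10 * P + 4 * W1" by (simp add: distrib_left)
  hence "SC (X (t0+T)) \<le> 10 * P + 4 * W1" using main' by (rule order_trans[rotated])
  thus ?thesis unfolding P_def U_def W1_def by (simp add: mult.assoc)
qed
end

lemma W1_sq:
  assumes "valid Op" "valid S"
  shows "(\<Sum>e\<in>E. a e * ld Op e * ld S e)^2 \<le> SC Op * SC S"
proof -
  have sO: "\<And>i. i < n \<Longrightarrow> Op i \<subseteq> E" using valid_sub[OF assms(1)] by auto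
  have sS: "\<And>i. i < n \<Longrightarrow> S i \<subseteq> E" using valid_sub[OF assms(2)] by auto
  have "(\<Sum>e\<in>E. a e * ld Op e * ld S e)^2 = (\<Sum>e\<in>E. (sqrt (a e) * ld Op e) * (sqrt (a e) * ld S e))^2"
    using a_nn by (intro arg_cong[where f="\<lambda>x. x^2"] sum.cong refl sq_help) auto
  also have "\<dots> \<le> (\<Sum>e\<in>E. (sqrt (a e) * ld Op e)^2) * (\<Sum>e\<in>E. (sqrt (a e) * ld S e)^2)"
    by (rule CS_sum)
  also have "(\<Sum>e\<in>E. (sqrt (a e) * ld Op e)^2) = (\<Sum>e\<in>E. a e * (ld Op e)^2)"
    using a_nn by (intro sum.cong refl) (simp add: power_mult_distrib)
  also have "(\<Sum>e\<in>E. (sqrt (a e) * ld S e)^2) = (\<Sum>e\<in>E. a e * (ld S e)^2)"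
    using a_nn by (intro sum.cong refl) (simp add: power_mult_distrib)
  also have "(\<Sum>e\<in>E. a e * (ld Op e)^2) * (\<Sum>e\<in>E. a e * (ld S e)^2) \<le> SC Op * SC S"
    using aSq_le[OF assms(1)] aSq_le[OF assms(2)] SC_nn[OF assms(1)] aSq_nn[of S]
    by (intro mult_mono) auto
  finally show ?thesis .
qed

end

lemma rec_step:
  fixes \<beta> U A w C :: real
  assumes b: "\<beta> \<ge> 1" and U: "U > 0" and A: "A \<ge> 0" and w: "w \<ge> 0" "w^2 \<le> U * A"
    and C: "C \<le> 10 * \<beta> * U + 4 * w"
  shows "(max 1 (C / (64 * \<beta> * U)))^2 \<le> max 1 (A / (64 * \<beta> * U))"
proof -
  define q where "q = max 1 (A / (64 * \<beta> * U))"
  define s where "s = sqrt q"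
  have q1: "q \<ge> 1" unfolding q_def by simp
  have s1: "s \<ge> 1" unfolding s_def using q1 by simp
  have sq: "s^2 = q" unfolding s_def using q1 by simp
  have bU: "\<beta> * U > 0" using b U by simp
  have Aq: "A \<le> 64 * \<beta> * U * q"
  proof -
    have D: "64 * \<beta> * U > 0" using bU by (simp add: mult.assoc)
    have "A / (64 * \<beta> * U) \<le> q" unfolding q_def by simp
    hence "A \<le> q * (64 * \<beta> * U)" using pos_divide_le_eq[OF D] by simp
    thus ?thesis by (simp add: mult.commute)
  qed
  have "U * A \<le> U * (64 * \<beta> * U * q)" using Aq U by (intro mult_left_mono) auto
  hence "w^2 \<le> U * (64 * \<beta> * U * q)" using w(2) by linarith
  also have "\<dots> \<le> U * (64 * \<beta> * \<beta> * U * q)"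
  proof -
    have "\<beta> \<le> \<beta> * \<beta>" using mult_left_mono[of 1 \<beta> \<beta>] b by simp
    hence "64 * \<beta> * U * q \<le> 64 * (\<beta> * \<beta>) * U * q" using U q1 by (intro mult_right_mono) auto
    thus ?thesis using U by (simp add: mult_left_mono mult.assoc)
  qed
  also have "\<dots> = (8 * \<beta> * U * s)^2" using sq by (simp add: power2_eq_square algebra_simps)
  finally have w2: "w^2 \<le> (8 * \<beta> * U * s)^2" .
  have "0 \<le> 8 * (\<beta> * U) * s" using bU s1 by simp
  hence "0 \<le> 8 * \<beta> * U * s" by (simp add: mult.assoc)
  with w2 have "w \<le> 8 * \<beta> * U * s" by (rule power2_le_imp_le)
  hence "C \<le> 10 * \<beta> * U + 32 * \<beta> * U * s" using C by linarith
  also have "\<dots> \<le> 42 * (\<beta> * U) * s"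
  proof -
    have "\<beta> * U * 1 \<le> \<beta> * U * s" using bU s1 by (intro mult_left_mono) auto
    thus ?thesis by (simp add: algebra_simps)
  qed
  also have "\<dots> \<le> 64 * (\<beta> * U) * s" using bU s1 by (intro mult_right_mono) auto
  finally have "C \<le> s * (64 * \<beta> * U)" by (simp add: mult.commute mult.assoc)
  moreover have D: "64 * \<beta> * U > 0" using bU by (simp add: mult.assoc)
  ultimately have "C / (64 * \<beta> * U) \<le> s" using pos_divide_le_eq[OF D] by simp
  hence "max 1 (C / (64 * \<beta> * U)) \<le> s" using s1 by simp
  hence "(max 1 (C / (64 * \<beta> * U)))^2 \<le> s^2" by (intro power_mono) auto
  thus ?thesis using sq q_def by simp
qed

lemma K_bounds:
  assumes "n \<ge> (3::nat)"
  defines "K \<equiv> nat \<lceil>log 2 (log 2 (real n))\<rceil>"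
  shows "K \<ge> 1" "real n \<le> 2 ^ (2 ^ K)"
proof -
  have l1: "log 2 (real n) > 1"
  proof -
    have "log 2 (real n) > log 2 2" using assms by (intro log_less) auto
    thus ?thesis by simp
  qed
  hence "log 2 (log 2 (real n)) > 0" by simp
  hence c: "\<lceil>log 2 (log 2 (real n))\<rceil> \<ge> 1" by (simp add: le_ceiling_iff)
  thus "K \<ge> 1" unfolding K_def by linarith
  have "real K = of_int \<lceil>log 2 (log 2 (real n))\<rceil>" unfolding K_def using c by simp
  hence "log 2 (log 2 (real n)) \<le> real K" by (simp add: le_of_int_ceiling)
  hence "2 powr (log 2 (log 2 (real n))) \<le> 2 powr (real K)" by (intro powr_mono) auto
  hence "log 2 (real n) \<le> 2 ^ K" using l1 by (simp add: powr_realpow)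
  hence "2 powr (log 2 (real n)) \<le> 2 powr (real (2 ^ K))" by (intro powr_mono) auto
  moreover have "2 powr (log 2 (real n)) = real n" using assms by simp
  moreover have "2 powr (real (2 ^ K)) = (2::real) ^ (2 ^ K)" by (rule powr_realpow) simp
  ultimately show "real n \<le> 2 ^ (2 ^ K)" by simp
qed

theorem theorem1:
  "\<exists>c::real. c > 0 \<and>
    (\<forall>(n::nat) E \<Sigma> a b (\<beta>::real) (T::nat) (X::nat \<Rightarrow> nat \<Rightarrow> nat set) (p::nat \<Rightarrow> nat).
       linear_congestion_game n E \<Sigma> a b \<and> n \<ge> 3 \<and> OPT n \<Sigma> a b > 0 \<and>
       \<beta> \<ge> 1 \<and> T \<ge> n \<and>
       valid_profile n \<Sigma> (X 0) \<and>
       (\<forall>t < nat \<lceil>log 2 (log 2 (real n))\<rceil> * T. best_response_step n \<Sigma> a b (X t) (p t) (X (Suc t))) \<and>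
       (\<forall>k < nat \<lceil>log 2 (log 2 (real n))\<rceil>. bounded_covering n \<beta> T p k)
       \<longrightarrow> social_cost a b n (X (nat \<lceil>log 2 (log 2 (real n))\<rceil> * T)) \<le> c * \<beta> * OPT n \<Sigma> a b)"
proof (intro exI[of _ 256] conjI allI impI)
  show "(256::real) > 0" by simp
  fix n E \<Sigma> a b \<beta> T X p
  assume H: "linear_congestion_game n E \<Sigma> a b \<and> n \<ge> 3 \<and> OPT n \<Sigma> a b > 0 \<and>
       \<beta> \<ge> 1 \<and> T \<ge> n \<and>
       valid_profile n \<Sigma> (X 0) \<and>
       (\<forall>t < nat \<lceil>log 2 (log 2 (real n))\<rceil> * T. best_response_step n \<Sigma> a b (X t) (p t) (X (Suc t))) \<and>
       (\<forall>k < nat \<lceil>log 2 (log 2 (real n))\<rceil>. bounded_covering n \<beta> T p k)"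
  define K where "K = nat \<lceil>log 2 (log 2 (real n))\<rceil>"
  have lcg: "linear_congestion_game n E \<Sigma> a b" and n3: "n \<ge> 3" and Opos: "OPT n \<Sigma> a b > 0"
    and b1: "\<beta> \<ge> 1" and v0: "valid_profile n \<Sigma> (X 0)"
    and st: "\<forall>t < K * T. best_response_step n \<Sigma> a b (X t) (p t) (X (Suc t))"
    and bc: "\<forall>k < K. bounded_covering n \<beta> T p k"
    using H unfolding K_def by auto
  interpret game n E \<Sigma> a b by (rule game.intro[OF lcg])
  have K1: "K \<ge> 1" and nK: "real n \<le> 2 ^ (2 ^ K)" using K_bounds[OF n3] unfolding K_def by auto
  have finS: "finite (\<Sigma> i)" if "i < n" for i
    using Sg_sub[OF that] finE by (meson finite_Pow_iff finite_subset subsetI PowI)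
  have finPi: "finite (Pi\<^sub>E {..<n} \<Sigma>)" using finS by (intro finite_PiE) auto
  have nePi: "Pi\<^sub>E {..<n} \<Sigma> \<noteq> {}"
    using lcg unfolding linear_congestion_game_def by (simp add: PiE_eq_empty_iff)
  obtain Op where Op: "Op \<in> Pi\<^sub>E {..<n} \<Sigma>" "social_cost a b n Op = OPT n \<Sigma> a b"
  proof -
    have "OPT n \<Sigma> a b \<in> social_cost a b n ` (Pi\<^sub>E {..<n} \<Sigma>)"
      unfolding OPT_def using finPi nePi by (intro Min_in) auto
    thus ?thesis using that by auto
  qed
  have valO: "valid_profile n \<Sigma> Op" using Op(1) unfolding valid_profile_def by auto
  define U where "U = OPT n \<Sigma> a b"
  have U: "U > 0" using Opos U_def by simp
  have SCO: "social_cost a b n Op = U" using Op U_def by simp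
  have stepsk: "\<forall>t\<in>{k*T..<k*T+T}. best_response_step n \<Sigma> a b (X t) (p t) (X (Suc t))" if "k < K" for k
  proof
    fix t assume "t \<in> {k*T..<k*T+T}"
    moreover have "k*T + T \<le> K*T" using mult_le_mono1[of "Suc k" K T] that by simp
    ultimately have "t < K * T" by simp
    thus "best_response_step n \<Sigma> a b (X t) (p t) (X (Suc t))" using st by auto
  qed
  have steps0: "\<forall>t\<in>{0..<0+K*T}. best_response_step n \<Sigma> a b (X t) (p t) (X (Suc t))" using st by auto
  have validk: "valid_profile n \<Sigma> (X (k*T))" if "k \<le> K" for k
    using valid_t[OF steps0 v0, of "k*T"] that by (simp add: mult_le_mono1)
  have coverk: "\<forall>i<n. 1 \<le> card {t\<in>{k*T..<k*T+T}. p t = i} \<and> real (card {t\<in>{k*T..<k*T+T}. p t = i}) \<le> \<beta>"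
    if "k < K" for k
    using bc that unfolding bounded_covering_def by (simp add: add.commute)
  define z where "z k = max 1 (social_cost a b n (X (k*T)) / (64 * \<beta> * U))" for k
  have SCnn: "social_cost a b n (X (k*T)) \<ge> 0" if "k \<le> K" for k using SC_nn[OF validk[OF that]] .
  have ind: "z k ^ (2^(k-1)) \<le> real n" if "1 \<le> k" "k \<le> K" for k
    using that
  proof (induction k)
    case 0 thus ?case by simp
  next
    case (Suc k)
    show ?case
    proof (cases "k = 0")
      case True
      have "social_cost a b n (X (0 * T + T)) \<le> (2 * real n + 2) * social_cost a b n Op"
        using cov_n[OF stepsk[of 0] validk[of 0] coverk[of 0] valO] K1 by simp
      hence c1: "social_cost a b n (X T) \<le> (2 * real n + 2) * U" using SCO by simp
      have "(2 * real n + 2) * U \<le> 64 * \<beta> * U * real n"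
      proof -
        have "2 * real n + 2 \<le> 64 * real n" using n3 by simp
        also have "\<dots> \<le> 64 * \<beta> * real n" using b1 by (simp add: mult_right_mono)
        finally show ?thesis using U by (simp add: mult_right_mono mult.commute mult.left_commute)
      qed
      hence "social_cost a b n (X T) \<le> 64 * \<beta> * U * real n" using c1 by linarith
      moreover have D: "64 * \<beta> * U > 0" using U b1 by simp
      ultimately have "social_cost a b n (X T) / (64 * \<beta> * U) \<le> real n"
        using pos_divide_le_eq[OF D] by (simp add: mult.commute)
      hence "z 1 \<le> real n" unfolding z_def using n3 by simp
      thus ?thesis using True by simp
    next
      case False
      hence k1: "1 \<le> k" by simp
      have IH: "z k ^ (2^(k-1)) \<le> real n" using Suc k1 by simp
      have kK: "k < K" using Suc by simp
      define W1 where "W1 = (\<Sum>e\<in>E. a e * ld Op e * ld (X (k*T)) e)"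
      have C: "social_cost a b n (X (k*T+T)) \<le> 10 * \<beta> * U + 4 * W1"
        using cov_rec[OF stepsk[OF kK] validk[of k] coverk[OF kK] valO b1] kK SCO U unfolding W1_def by simp
      have w2: "W1^2 \<le> U * social_cost a b n (X (k*T))"
        using W1_sq[OF valO validk[of k]] kK SCO unfolding W1_def by simp
      have w0: "W1 \<ge> 0" unfolding W1_def using a_nn by (intro sum_nonneg) auto
      have "z (Suc k) ^ 2 \<le> z k"
        using rec_step[OF b1 U SCnn[of k] w0 w2 C] kK unfolding z_def by (simp add: add.commute)
      have zk0: "z (Suc k) \<ge> 0" unfolding z_def by simp
      obtain j where kj: "k = Suc j" using k1 by (cases k) auto
      have "z (Suc k) ^ (2^(Suc k - 1)) = (z (Suc k) ^ 2) ^ (2^(k-1))"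
        unfolding kj by (simp add: power_mult[symmetric])
      also have "\<dots> \<le> z k ^ (2^(k-1))"
        using \<open>z (Suc k) ^ 2 \<le> z k\<close> zk0 by (intro power_mono) auto
      finally show ?thesis using IH by simp
    qed
  qed
  have zK: "z K ^ (2^(K-1)) \<le> 4 ^ (2^(K-1))"
  proof -
    have "(4::real) ^ (2^(K-1)) = 2 ^ (2 * 2^(K-1))" by (simp add: power_mult)
    also have "2 * 2^(K-1) = (2::nat)^K" using K1 by (cases K) auto
    finally have e: "(4::real) ^ (2^(K-1)) = 2 ^ (2^K)" .
    show ?thesis using ind[OF K1 order_refl] nK e by linarith
  qed
  have "z K \<le> 4"
  proof (rule ccontr)
    assume "\<not> z K \<le> 4"
    hence "(4::real) ^ (2^(K-1)) < z K ^ (2^(K-1))" by (intro power_strict_mono) auto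
    thus False using zK by simp
  qed
  hence "social_cost a b n (X (K*T)) / (64 * \<beta> * U) \<le> 4" unfolding z_def by simp
  moreover have D: "64 * \<beta> * U > 0" using U b1 by simp
  ultimately have "social_cost a b n (X (K*T)) \<le> 4 * (64 * \<beta> * U)"
    using pos_divide_le_eq[OF D] by simp
  hence "social_cost a b n (X (K*T)) \<le> 256 * \<beta> * U" by simp
  thus "social_cost a b n (X (nat \<lceil>log 2 (log 2 (real n))\<rceil> * T)) \<le> 256 * \<beta> * OPT n \<Sigma> a b"
    unfolding K_def U_def by simp
qed

end
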